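(* Let $k\ge2$, $n\ge1$ be integers, let $\bar{\mathcal{P}}\in\mathbb{R}^{[k,n]}$ be a columnwise-substochastic tensor, $\mathbf{v}\in\mathbb{R}^n$ a stochastic vector and $\alpha\in[0,1)$ with $\varsigma:=(2k-3)\alpha(1-\alpha)^{-\frac{k-2}{k-1}}<1$. Then the MLPPR system $(\mathbf{e}^T\mathbf{y})^{k-2}\mathbf{y}-\alpha\bar{\mathcal{P}}\mathbf{y}^{k-1}=\mathbf{v}$ has a unique nonnegative solution $\mathbf{y}_*$ in $\Delta:=\{\mathbf{y}\in\mathbb{R}^n_+:\mathbf{e}^T\mathbf{y}\le(1-\alpha)^{-\frac{1}{k-1}}\}$.
   Context: For $\mathcal{P}\in\mathbb{R}^{[k,n]}$ (real tensors of order $k$, dimension $n$) and $\mathbf{y}\in\mathbb{R}^n$, $(\mathcal{P}\mathbf{y}^{k-1})_i=\sum_{i_2,\dots,i_k}p_{i i_2\dots i_k}y_{i_2}\cdots y_{i_k}$. $\bar{\mathcal{P}}$ is columnwise-substochastic if its entries are nonnegative and $\sum_{i}\bar p_{i i_2\dots i_k}\le1$ for all $i_2,\dots,i_k$. $\mathbf{e}$ is the all-ones vector; a stochastic vector is nonnegative with entries summing to $1$. The MLPPR system $(I\circ\mathbf{e}^{\circ(k-2)}-\alpha\bar{\mathcal{P}})\mathbf{y}^{k-1}=\mathbf{v}$ is exactly $(\mathbf{e}^T\mathbf{y})^{k-2}\mathbf{y}-\alpha\bar{\mathcal{P}}\mathbf{y}^{k-1}=\mathbf{v}$. *)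

theory Defs
  imports "HOL-Analysis.Analysis"
begin

text \<open>A real tensor of order k and dimension n = CARD('n) is represented as a function
  on index lists; the entry p_{i i_2 ... i_k} is P [i, i_2, ..., i_k]. Only lists of
  length k are relevant.\<close>

definition index_tuples :: "nat \<Rightarrow> 'n::finite list set" where
  "index_tuples m = {js. length js = m}"

definition tensor_apply :: "nat \<Rightarrow> ('n::finite list \<Rightarrow> real) \<Rightarrow> real^'n \<Rightarrow> real^'n" where
  "tensor_apply k P y = (\<chi> i. \<Sum>js\<in>index_tuples (k - 1). P (i # js) * prod_list (map (\<lambda>j. y $ j) js))"

definition col_substochastic :: "nat \<Rightarrow> ('n::finite list \<Rightarrow> real) \<Rightarrow> bool" where
  "col_substochastic k P \<longleftrightarrow>
     (\<forall>js\<in>index_tuples (k - 1). (\<forall>i. 0 \<le> P (i # js)) \<and> (\<Sum>i\<in>UNIV. P (i # js)) \<le> 1)"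

definition esum :: "real^'n::finite \<Rightarrow> real" where
  "esum y = (\<Sum>i\<in>UNIV. y $ i)"

definition stochastic_vec :: "real^'n::finite \<Rightarrow> bool" where
  "stochastic_vec v \<longleftrightarrow> (\<forall>i. 0 \<le> v $ i) \<and> esum v = 1"

definition Delta_set :: "nat \<Rightarrow> real \<Rightarrow> (real^'n::finite) set" where
  "Delta_set k \<alpha> = {y. (\<forall>i. 0 \<le> y $ i) \<and> esum y \<le> (1 - \<alpha>) powr (- 1 / (real k - 1))}"

end

theory Submission
  imports Defs
begin

definition norm1 :: "real^'n::finite \<Rightarrow> real" where
  "norm1 d = (\<Sum>i\<in>UNIV. \<bar>d $ i\<bar>)"

abbreviation pl :: "real^'n::finite \<Rightarrow> 'n list \<Rightarrow> real" where
  "pl y js \<equiv> prod_list (map (\<lambda>j. y $ j) js)"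

lemma index_tuples_0: "index_tuples 0 = {[]}"
  unfolding index_tuples_def by auto

lemma index_tuples_Suc:
  "index_tuples (Suc m) = (\<lambda>(j, js). j # js) ` (UNIV \<times> index_tuples m)"
  unfolding index_tuples_def
proof (auto simp: image_iff)
  fix xs :: "'a list" assume "length xs = Suc m"
  then show "\<exists>a b. length b = m \<and> xs = a # b" by (cases xs) auto
qed

lemma finite_index_tuples: "finite (index_tuples m :: 'n::finite list set)"
proof (induction m)
  case 0 then show ?case by (simp add: index_tuples_0)
next
  case (Suc m) then show ?case by (simp add: index_tuples_Suc)
qed

lemma sum_index_tuples_Suc:
  "(\<Sum>js\<in>index_tuples (Suc m). f js) = (\<Sum>j\<in>UNIV. \<Sum>js\<in>index_tuples m. f (j # js :: 'n::finite list))"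
proof -
  have inj: "inj_on (\<lambda>(j, js). j # js) (UNIV \<times> index_tuples m)"
    by (auto simp: inj_on_def)
  have "(\<Sum>js\<in>index_tuples (Suc m). f js) = (\<Sum>p\<in>UNIV \<times> index_tuples m. f ((\<lambda>(j, js). j # js) p))"
    unfolding index_tuples_Suc by (rule sum.reindex[OF inj, unfolded comp_def])
  also have "\<dots> = (\<Sum>j\<in>UNIV. \<Sum>js\<in>index_tuples m. f (j # js))"
    by (subst sum.cartesian_product) (simp add: case_prod_beta)
  finally show ?thesis .
qed

lemma sum_pl: "(\<Sum>js\<in>index_tuples m. pl y js) = (esum y) ^ m"
proof (induction m)
  case 0 then show ?case by (simp add: index_tuples_0)
next
  case (Suc m)
  have "(\<Sum>js\<in>index_tuples (Suc m). pl y js) = (\<Sum>j\<in>UNIV. y $ j * (\<Sum>js\<in>index_tuples m. pl y js))"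
    by (simp add: sum_index_tuples_Suc sum_distrib_left)
  also have "\<dots> = esum y ^ Suc m" using Suc by (simp add: esum_def sum_distrib_right)
  finally show ?case .
qed

lemma pl_nonneg: "(\<forall>i. 0 \<le> y $ i) \<Longrightarrow> 0 \<le> pl y js"
  by (induction js) auto

lemma esum_nonneg: "(\<forall>i. 0 \<le> y $ i) \<Longrightarrow> 0 \<le> esum y"
  unfolding esum_def by (simp add: sum_nonneg)

lemma pl_lip:
  fixes y z :: "real^'n::finite"
  assumes y: "\<forall>i. 0 \<le> y $ i" and z: "\<forall>i. 0 \<le> z $ i"
    and sy: "esum y \<le> M" and sz: "esum z \<le> M"
  shows "(\<Sum>js\<in>index_tuples m. \<bar>pl y js - pl z js\<bar>) \<le> real m * M ^ (m - 1) * norm1 (y - z)"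
proof (induction m)
  case 0 then show ?case by (simp add: index_tuples_0)
next
  case (Suc m)
  have M0: "0 \<le> M" using esum_nonneg[OF y] sy by linarith
  have "(\<Sum>js\<in>index_tuples (Suc m). \<bar>pl y js - pl z js\<bar>)
      = (\<Sum>j\<in>UNIV. \<Sum>js\<in>index_tuples m. \<bar>y $ j * pl y js - z $ j * pl z js\<bar>)"
    by (simp add: sum_index_tuples_Suc)
  also have "\<dots> \<le> (\<Sum>j\<in>UNIV. \<Sum>js\<in>index_tuples m. \<bar>y $ j - z $ j\<bar> * pl y js + z $ j * \<bar>pl y js - pl z js\<bar>)"
  proof (intro sum_mono)
    fix j js
    have "y $ j * pl y js - z $ j * pl z js = (y $ j - z $ j) * pl y js + z $ j * (pl y js - pl z js)"
      by (simp add: algebra_simps)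
    then show "\<bar>y $ j * pl y js - z $ j * pl z js\<bar> \<le> \<bar>y $ j - z $ j\<bar> * pl y js + z $ j * \<bar>pl y js - pl z js\<bar>"
      using abs_triangle_ineq[of "(y $ j - z $ j) * pl y js" "z $ j * (pl y js - pl z js)"]
        pl_nonneg[OF y, of js] z
      by (simp add: abs_mult)
  qed
  also have "\<dots> = norm1 (y - z) * esum y ^ m + esum z * (\<Sum>js\<in>index_tuples m. \<bar>pl y js - pl z js\<bar>)"
    by (simp add: sum.distrib sum_distrib_left[symmetric] sum_distrib_right[symmetric] sum_pl norm1_def esum_def)
  also have "\<dots> \<le> norm1 (y - z) * M ^ m + M * (real m * M ^ (m - 1) * norm1 (y - z))"
  proof (intro add_mono mult_mono)
    show "esum y ^ m \<le> M ^ m" using sy esum_nonneg[OF y] by (simp add: power_mono)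
    show "(\<Sum>js\<in>index_tuples m. \<bar>pl y js - pl z js\<bar>) \<le> real m * M ^ (m - 1) * norm1 (y - z)" by (rule Suc)
  qed (use sz esum_nonneg[OF z] esum_nonneg[OF y] M0 in \<open>auto simp: norm1_def sum_nonneg\<close>)
  also have "\<dots> = real (Suc m) * M ^ (Suc m - 1) * norm1 (y - z)"
    by (cases m) (auto simp: algebra_simps)
  finally show ?case .
qed


lemma T_comp: "tensor_apply k P y $ i = (\<Sum>js\<in>index_tuples (k - 1). P (i # js) * pl y js)"
  unfolding tensor_apply_def by simp

lemma T_nonneg:
  assumes "col_substochastic k P" "\<forall>i. 0 \<le> y $ i"
  shows "0 \<le> tensor_apply k P y $ i"
  using assms unfolding T_comp col_substochastic_def
  by (auto intro!: sum_nonneg mult_nonneg_nonneg pl_nonneg)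

lemma esum_T_le:
  assumes P: "col_substochastic k P" and y: "\<forall>i. 0 \<le> y $ i"
  shows "esum (tensor_apply k P y) \<le> esum y ^ (k - 1)"
proof -
  have "esum (tensor_apply k P y) = (\<Sum>js\<in>index_tuples (k - 1). (\<Sum>i\<in>UNIV. P (i # js)) * pl y js)"
    unfolding esum_def T_comp by (subst sum.swap) (simp add: sum_distrib_right)
  also have "\<dots> \<le> (\<Sum>js\<in>index_tuples (k - 1). 1 * pl y js)"
    using P pl_nonneg[OF y] unfolding col_substochastic_def
    by (intro sum_mono mult_right_mono) auto
  also have "\<dots> = esum y ^ (k - 1)" by (simp add: sum_pl)
  finally show ?thesis .
qed

lemma T_lip:
  assumes P: "col_substochastic k P" and y: "\<forall>i. 0 \<le> y $ i" and z: "\<forall>i. 0 \<le> z $ i"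
    and sy: "esum y \<le> M" and sz: "esum z \<le> M"
  shows "norm1 (tensor_apply k P y - tensor_apply k P z) \<le> real (k - 1) * M ^ (k - 2) * norm1 (y - z)"
proof -
  have "norm1 (tensor_apply k P y - tensor_apply k P z)
      = (\<Sum>i\<in>UNIV. \<bar>\<Sum>js\<in>index_tuples (k - 1). P (i # js) * (pl y js - pl z js)\<bar>)"
    unfolding norm1_def by (simp add: T_comp sum_subtractf[symmetric] algebra_simps)
  also have "\<dots> \<le> (\<Sum>i\<in>UNIV. \<Sum>js\<in>index_tuples (k - 1). P (i # js) * \<bar>pl y js - pl z js\<bar>)"
  proof (intro sum_mono)
    fix i
    show "\<bar>\<Sum>js\<in>index_tuples (k - 1). P (i # js) * (pl y js - pl z js)\<bar>
        \<le> (\<Sum>js\<in>index_tuples (k - 1). P (i # js) * \<bar>pl y js - pl z js\<bar>)"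
      apply (rule order.trans[OF sum_abs])
      using P unfolding col_substochastic_def by (intro sum_mono) (auto simp: abs_mult)
  qed
  also have "\<dots> = (\<Sum>js\<in>index_tuples (k - 1). (\<Sum>i\<in>UNIV. P (i # js)) * \<bar>pl y js - pl z js\<bar>)"
    by (subst sum.swap) (simp add: sum_distrib_right)
  also have "\<dots> \<le> (\<Sum>js\<in>index_tuples (k - 1). 1 * \<bar>pl y js - pl z js\<bar>)"
    using P unfolding col_substochastic_def
    by (intro sum_mono mult_right_mono) auto
  also have "\<dots> \<le> real (k - 1) * M ^ (k - 1 - 1) * norm1 (y - z)"
    using pl_lip[OF y z sy sz, of "k - 1"] by (simp only: mult_1_left)
  finally show ?thesis by (simp add: numeral_2_eq_2 diff_diff_add)
qed

lemma pl_scale: "pl (c *\<^sub>R x) js = c ^ length js * pl x js"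
  by (induction js) auto

lemma T_homog: "tensor_apply k P (c *\<^sub>R x) = c ^ (k - 1) *\<^sub>R tensor_apply k P x"
  unfolding tensor_apply_def
  by (simp add: vec_eq_iff pl_scale index_tuples_def sum_distrib_left algebra_simps)

lemma esum_diff: "esum (x - y) = esum x - esum y"
  unfolding esum_def by (simp add: sum_subtractf)

lemma esum_add: "esum (x + y) = esum x + esum y"
  unfolding esum_def by (simp add: sum.distrib)

lemma esum_scale: "esum (c *\<^sub>R x) = c * esum x"
  unfolding esum_def by (simp add: sum_distrib_left)

lemma abs_esum_le: "\<bar>esum x\<bar> \<le> norm1 x"
  unfolding esum_def norm1_def by (rule sum_abs)

lemma norm1_diff_le: "norm1 (x - y) \<le> norm1 x + norm1 y"
  unfolding norm1_def by (simp add: sum.distrib[symmetric] sum_mono abs_triangle_ineq4)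

lemma norm1_scale: "norm1 (c *\<^sub>R x) = \<bar>c\<bar> * norm1 x"
  unfolding norm1_def by (simp add: sum_distrib_left abs_mult)

lemma norm1_nonneg: "0 \<le> norm1 x"
  unfolding norm1_def by (simp add: sum_nonneg)

lemma norm1_zero: "norm1 x \<le> 0 \<Longrightarrow> x = 0"
proof -
  assume "norm1 x \<le> 0"
  then have "(\<Sum>i\<in>UNIV. \<bar>x $ i\<bar>) = 0" using norm1_nonneg[of x] unfolding norm1_def by linarith
  then show "x = 0" by (subst (asm) sum_nonneg_eq_0_iff) (auto simp: vec_eq_iff)
qed


lemma pow_ineq_mono:
  fixes a b :: real and m :: nat
  assumes "1 \<le> b" "b \<le> a"
  shows "real m * (a ^ (m - 1) - b ^ (m - 1)) \<le> (real m - 1) * (a ^ m - b ^ m)"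
proof -
  define f where "f u = (real m - 1) * u ^ m - real m * u ^ (m - 1)" for u :: real
  have "f b \<le> f a"
  proof (rule DERIV_nonneg_imp_nondecreasing[OF assms(2)])
    fix x assume x: "b \<le> x" "x \<le> a"
    have d: "(f has_real_derivative
        ((real m - 1) * (real m * x ^ (m - 1)) - real m * (real (m - 1) * x ^ (m - 1 - 1)))) (at x)"
      unfolding f_def by (auto intro!: derivative_eq_intros)
    have "0 \<le> (real m - 1) * (real m * x ^ (m - 1)) - real m * (real (m - 1) * x ^ (m - 1 - 1))"
    proof (cases m)
      case 0 then show ?thesis by simp
    next
      case (Suc n)
      have x1: "1 \<le> x" using x assms by linarith
      have "x ^ (n - 1) \<le> x ^ n"
      proof (cases n)
        case 0 then show ?thesis by simp
      next
        case (Suc l) then show ?thesis using x1 by simp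
      qed
      moreover have "real n \<ge> 0" by simp
      ultimately have "real (Suc n) * (real n * x ^ (n - 1)) \<le> real (Suc n) * (real n * x ^ n)"
        by (intro mult_left_mono) auto
      then show ?thesis using Suc by (simp add: algebra_simps)
    qed
    then show "\<exists>y. (f has_real_derivative y) (at x) \<and> 0 \<le> y" using d by blast
  qed
  then show ?thesis unfolding f_def by (simp add: algebra_simps)
qed

lemma pow_ineq:
  fixes a b :: real and m :: nat
  assumes "1 \<le> a" "1 \<le> b"
  shows "real m * \<bar>a ^ (m - 1) - b ^ (m - 1)\<bar> \<le> (real m - 1) * \<bar>a ^ m - b ^ m\<bar>"
proof (cases "b \<le> a")
  case True
  have "b ^ (m - 1) \<le> a ^ (m - 1)" "b ^ m \<le> a ^ m" using True assms by (auto intro: power_mono)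
  then show ?thesis using pow_ineq_mono[OF assms(2) True, of m] by simp
next
  case False
  then have F: "a \<le> b" by simp
  have "a ^ (m - 1) \<le> b ^ (m - 1)" "a ^ m \<le> b ^ m" using F assms by (auto intro: power_mono)
  then show ?thesis using pow_ineq_mono[OF assms(1) F, of m] by simp
qed

lemma norm1_esum: "\<forall>i. 0 \<le> z $ i \<Longrightarrow> norm1 z = esum z"
  unfolding norm1_def esum_def by simp

lemma ge1_from_pow:
  fixes s :: real
  assumes "0 \<le> s" "1 \<le> s ^ n" "0 < n"
  shows "1 \<le> s"
proof (rule ccontr)
  assume "\<not> 1 \<le> s"
  then have "s ^ n < 1 ^ n" using assms by (intro power_strict_mono) auto
  then show False using assms by simp
qed

lemma sum_eq:
  assumes k: "k \<ge> 2" and P: "col_substochastic k P" and y: "\<forall>i. 0 \<le> y $ i"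
    and v: "esum v = 1" and al: "0 \<le> \<alpha>"
    and eq: "(esum y) ^ (k - 2) *\<^sub>R y - \<alpha> *\<^sub>R tensor_apply k P y = v"
  shows "esum y ^ (k - 1) = 1 + \<alpha> * esum (tensor_apply k P y)" and "1 \<le> esum y"
proof -
  have "esum ((esum y) ^ (k - 2) *\<^sub>R y - \<alpha> *\<^sub>R tensor_apply k P y) = 1" using eq v by simp
  then have "esum y ^ (k - 2) * esum y - \<alpha> * esum (tensor_apply k P y) = 1"
    by (simp add: esum_diff esum_scale)
  moreover have "esum y ^ (k - 2) * esum y = esum y ^ (k - 1)"
  proof -
    have "k - 1 = Suc (k - 2)" using k by simp
    then show ?thesis by (simp only: power_Suc2)
  qed
  ultimately show e: "esum y ^ (k - 1) = 1 + \<alpha> * esum (tensor_apply k P y)" by simp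
  have "0 \<le> esum (tensor_apply k P y)"
    using esum_nonneg T_nonneg[OF P y] by blast
  then have "1 \<le> esum y ^ (k - 1)" using e al by simp
  then show "1 \<le> esum y" using ge1_from_pow[of "esum y" "k - 1"] esum_nonneg[OF y] k by simp
qed

lemma lin_aux:
  fixes a C D p q X r :: real
  assumes "a * C * D * p \<le> a * C * D * (p * X)" "r = p + q"
  shows "a * (p * C * D) + q * a * C * D * X \<le> r * a * C * D * X"
proof -
  have "r * a * C * D * X = a * C * D * (p * X) + q * a * C * D * X"
    unfolding assms(2) by (simp add: algebra_simps)
  moreover have "a * (p * C * D) = a * C * D * p" by (simp add: algebra_simps)
  ultimately show ?thesis using assms(1) by linarith
qed

lemma uniq_core:
  assumes k: "k \<ge> 2" and P: "col_substochastic k P"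
    and y: "\<forall>i. 0 \<le> y $ i" and z: "\<forall>i. 0 \<le> z $ i"
    and sy: "esum y \<le> c" and sz: "esum z \<le> c"
    and v: "esum v = 1" and al: "0 \<le> \<alpha>"
    and eqy: "(esum y) ^ (k - 2) *\<^sub>R y - \<alpha> *\<^sub>R tensor_apply k P y = v"
    and eqz: "(esum z) ^ (k - 2) *\<^sub>R z - \<alpha> *\<^sub>R tensor_apply k P z = v"
    and K: "(2 * real k - 3) * \<alpha> * c ^ (k - 2) < 1"
    and st: "esum z \<le> esum y"
  shows "y = z"
proof -
  define s where "s = esum y"
  define t where "t = esum z"
  define C where "C = c ^ (k - 2)"
  define D where "D = norm1 (y - z)"
  define Q where "Q = norm1 (tensor_apply k P y - tensor_apply k P z)"
  have s1: "1 \<le> s" and t1: "1 \<le> t" using sum_eq(2)[OF k P y v al eqy] sum_eq(2)[OF k P z v al eqz]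
    by (auto simp: s_def t_def)
  have c0: "0 \<le> c" using s1 sy s_def by linarith
  have C0: "0 \<le> C" using c0 by (simp add: C_def)
  have D0: "0 \<le> D" by (simp add: D_def norm1_nonneg)
  have Q: "Q \<le> real (k - 1) * C * D"
    unfolding Q_def C_def D_def by (rule T_lip[OF P y z sy sz])
  have "s ^ (k - 1) - t ^ (k - 1) = \<alpha> * esum (tensor_apply k P y - tensor_apply k P z)"
    using sum_eq(1)[OF k P y v al eqy] sum_eq(1)[OF k P z v al eqz]
    by (simp add: s_def t_def esum_diff algebra_simps)
  then have "\<bar>s ^ (k - 1) - t ^ (k - 1)\<bar> \<le> \<alpha> * Q"
    using abs_esum_le[of "tensor_apply k P y - tensor_apply k P z"] al
    by (simp add: Q_def abs_mult mult_left_mono)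
  then have "(real (k - 1) - 1) * \<bar>s ^ (k - 1) - t ^ (k - 1)\<bar> \<le> (real (k - 1) - 1) * (\<alpha> * Q)"
    using k by (intro mult_left_mono) auto
  then have "real (k - 1) * \<bar>s ^ (k - 2) - t ^ (k - 2)\<bar> \<le> (real (k - 1) - 1) * (\<alpha> * Q)"
    using pow_ineq[OF s1 t1, of "k - 1"] by (simp add: numeral_2_eq_2 diff_diff_add)
  also have "\<dots> \<le> (real (k - 1) - 1) * (\<alpha> * (real (k - 1) * C * D))"
    using Q k al by (intro mult_left_mono) auto
  finally have "real (k - 1) * \<bar>s ^ (k - 2) - t ^ (k - 2)\<bar> \<le> real (k - 1) * (real (k - 2) * \<alpha> * C * D)"
    using k by (simp add: algebra_simps of_nat_diff)
  then have ST: "\<bar>s ^ (k - 2) - t ^ (k - 2)\<bar> \<le> real (k - 2) * \<alpha> * C * D"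
    using k by (subst (asm) mult_le_cancel_left_pos) auto
  have vec: "s ^ (k - 2) *\<^sub>R (y - z) = \<alpha> *\<^sub>R (tensor_apply k P y - tensor_apply k P z) - (s ^ (k - 2) - t ^ (k - 2)) *\<^sub>R z"
    using eqy eqz unfolding s_def t_def
    by (simp add: algebra_simps)
  have "s ^ (k - 2) * D = norm1 (s ^ (k - 2) *\<^sub>R (y - z))"
    using s1 by (simp add: norm1_scale D_def)
  also have "\<dots> \<le> \<alpha> * Q + \<bar>s ^ (k - 2) - t ^ (k - 2)\<bar> * t"
    unfolding vec
    using norm1_diff_le[of "\<alpha> *\<^sub>R (tensor_apply k P y - tensor_apply k P z)" "(s ^ (k - 2) - t ^ (k - 2)) *\<^sub>R z"] al
    by (simp only: norm1_scale Q_def norm1_esum[OF z] t_def abs_of_nonneg)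
  also have "\<dots> \<le> \<alpha> * (real (k - 1) * C * D) + (real (k - 2) * \<alpha> * C * D) * t"
    using Q ST al t1 by (intro add_mono mult_left_mono mult_right_mono) auto
  also have "\<dots> \<le> \<alpha> * (real (k - 1) * C * D) + (real (k - 2) * \<alpha> * C * D) * s ^ (k - 2)"
  proof -
    have "real (k - 2) * t \<le> real (k - 2) * s ^ (k - 2)"
    proof (cases "k = 2")
      case False
      then have "s \<le> s ^ (k - 2)" using s1 k power_increasing[of 1 "k - 2" s] by simp
      then show ?thesis using st s_def t_def by (intro mult_left_mono) auto
    qed simp
    then have "(real (k - 2) * t) * (\<alpha> * C * D) \<le> (real (k - 2) * s ^ (k - 2)) * (\<alpha> * C * D)"
      using al C0 D0 by (intro mult_right_mono) auto
    then show ?thesis by (simp add: algebra_simps)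
  qed
  also have "\<dots> \<le> (2 * real k - 3) * \<alpha> * C * D * s ^ (k - 2)"
  proof -
    have X: "1 \<le> s ^ (k - 2)" using s1 by simp
    have "0 \<le> \<alpha> * C * D" using al C0 D0 by simp
    moreover have "real (k - 1) \<le> real (k - 1) * s ^ (k - 2)"
      using mult_left_mono[OF X, of "real (k - 1)"] by simp
    ultimately have "\<alpha> * C * D * real (k - 1) \<le> \<alpha> * C * D * (real (k - 1) * s ^ (k - 2))"
      by (rule mult_left_mono[rotated])
    moreover have "2 * real k - 3 = real (k - 1) + real (k - 2)" using k by (simp add: of_nat_diff)
    ultimately show ?thesis by (simp only: lin_aux)
  qed
  finally have "s ^ (k - 2) * D * (1 - (2 * real k - 3) * \<alpha> * C) \<le> 0"
    by (simp add: algebra_simps)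
  moreover have "0 < 1 - (2 * real k - 3) * \<alpha> * C" using K C_def by simp
  moreover have "0 < s ^ (k - 2)" using s1 by simp
  ultimately have A: "D * (s ^ (k - 2) * (1 - (2 * real k - 3) * \<alpha> * C)) \<le> 0"
    and B: "0 < s ^ (k - 2) * (1 - (2 * real k - 3) * \<alpha> * C)"
    by (simp_all only: mult_ac mult_pos_pos)
  from A B have "D \<le> 0"
    using mult_le_0_iff[of D "s ^ (k - 2) * (1 - (2 * real k - 3) * \<alpha> * C)"] by linarith
  then have "y - z = 0" using norm1_zero[of "y - z"] D_def by simp
  then show ?thesis by simp
qed


lemma pl_cont: "continuous_on UNIV (\<lambda>y::real^'n::finite. pl y js)"
proof (induction js)
  case Nil then show ?case by simp
next
  case (Cons j js)
  have "continuous_on UNIV (\<lambda>y::real^'n. y $ j)"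
    by (rule continuous_on_component[OF continuous_on_id])
  then show ?case using Cons by (simp add: continuous_on_mult)
qed

lemma T_cont: "continuous_on UNIV (tensor_apply k P)"
  unfolding tensor_apply_def
  by (intro continuous_on_vec_lambda continuous_on_sum continuous_on_mult continuous_on_const pl_cont)

lemma esum_cont: "continuous_on UNIV (esum :: real^'n::finite \<Rightarrow> real)"
  unfolding esum_def by (intro continuous_on_sum continuous_on_component continuous_on_id)

lemma existence_simplex:
  assumes k: "k \<ge> 2" and P: "col_substochastic k P" and v: "stochastic_vec v"
    and al: "0 \<le> \<alpha>" "\<alpha> < 1"
  obtains x :: "real^'n::finite" where "\<forall>i. 0 \<le> x $ i" "esum x = 1"
    "x = \<alpha> *\<^sub>R tensor_apply k P x + (1 - \<alpha> * esum (tensor_apply k P x)) *\<^sub>R v"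
proof -
  define S :: "(real^'n) set" where "S = {x. (\<forall>i. 0 \<le> x $ i) \<and> esum x = 1}"
  define f where "f x = \<alpha> *\<^sub>R tensor_apply k P x + (1 - \<alpha> * esum (tensor_apply k P x)) *\<^sub>R v" for x
  have v0: "\<forall>i. 0 \<le> v $ i" and v1: "esum v = 1" using v by (auto simp: stochastic_vec_def)
  have closed: "closed S"
    unfolding S_def
    by (intro closed_Collect_conj closed_Collect_all closed_Collect_le closed_Collect_eq
        esum_cont continuous_on_const continuous_on_component continuous_on_id)
  have "S \<subseteq> cball 0 1"
  proof
    fix x assume "x \<in> S"
    then have "norm x \<le> 1" using norm_le_l1_cart[of x] norm1_esum[of x]
      by (auto simp: S_def norm1_def)
    then show "x \<in> cball 0 1" by simp
  qed
  then have bounded: "bounded S" using bounded_cball bounded_subset by blast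
  have compact: "compact S" using closed bounded compact_eq_bounded_closed by blast
  have convex: "convex S"
    unfolding convex_def S_def
    by (auto simp: esum_add esum_scale intro!: add_nonneg_nonneg mult_nonneg_nonneg)
  have ne: "S \<noteq> {}"
  proof -
    have "(\<chi> i. 1 / real CARD('n)) \<in> S"
      by (simp add: S_def esum_def)
    then show ?thesis by blast
  qed
  have c1: "continuous_on UNIV (\<lambda>x. esum (tensor_apply k P x))"
    by (rule continuous_on_compose2[OF esum_cont T_cont]) auto
  have "continuous_on UNIV f"
    unfolding f_def
    by (intro continuous_on_add continuous_on_scaleR continuous_on_const continuous_on_diff
        continuous_on_mult c1 T_cont)
  then have cont: "continuous_on S f" by (rule continuous_on_subset) auto
  have maps: "f \<in> S \<rightarrow> S"
  proof
    fix x assume x: "x \<in> S"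
    then have x0: "\<forall>i. 0 \<le> x $ i" and x1: "esum x = 1" by (auto simp: S_def)
    have q1: "esum (tensor_apply k P x) \<le> 1" using esum_T_le[OF P x0] x1 by simp
    have q0: "0 \<le> esum (tensor_apply k P x)" using esum_nonneg T_nonneg[OF P x0] by blast
    have w0: "0 \<le> 1 - \<alpha> * esum (tensor_apply k P x)"
      using q1 al mult_le_one[of \<alpha> "esum (tensor_apply k P x)"] q0 by linarith
    show "f x \<in> S"
      unfolding S_def f_def
      using T_nonneg[OF P x0] al w0 v0 v1
      by (auto simp: esum_add esum_scale)
  qed
  obtain x where "x \<in> S" "f x = x" using brouwer[OF compact convex ne cont maps] by blast
  then show ?thesis using that by (auto simp: S_def f_def)
qed

theorem corollary3p11:
  fixes k :: nat and P :: "'n::finite list \<Rightarrow> real" and v :: "real^'n" and \<alpha> :: real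
  assumes "k \<ge> 2"
    and "col_substochastic k P"
    and "stochastic_vec v"
    and "0 \<le> \<alpha>" and "\<alpha> < 1"
    and "(2 * real k - 3) * \<alpha> * (1 - \<alpha>) powr (- (real k - 2) / (real k - 1)) < 1"
  shows "\<exists>!y. y \<in> Delta_set k \<alpha> \<and>
           (esum y) ^ (k - 2) *\<^sub>R y - \<alpha> *\<^sub>R tensor_apply k P y = v"
proof -
  note k = assms(1) and P = assms(2) and v = assms(3) and al = assms(4,5)
  define c where "c = (1 - \<alpha>) powr (- 1 / (real k - 1))"
  have a0: "0 < 1 - \<alpha>" using al by simp
  have kr: "real k - 1 > 0" using k by simp
  have cC: "c ^ (k - 2) = (1 - \<alpha>) powr (- (real k - 2) / (real k - 1))"
  proof -
    have "c ^ (k - 2) = c powr real (k - 2)" using a0 by (simp add: c_def powr_realpow)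
    also have "\<dots> = (1 - \<alpha>) powr (- 1 / (real k - 1) * real (k - 2))" by (simp add: c_def powr_powr)
    also have "- 1 / (real k - 1) * real (k - 2) = - (real k - 2) / (real k - 1)"
    proof -
      have e: "real (k - 2) = real k - 2" using k by (simp add: of_nat_diff)
      show ?thesis using kr by (simp add: e field_simps)
    qed
    finally show ?thesis .
  qed
  have K: "(2 * real k - 3) * \<alpha> * c ^ (k - 2) < 1" using assms(6) cC by simp
  have v1: "esum v = 1" using v by (simp add: stochastic_vec_def)
  have Dset: "Delta_set k \<alpha> = {y. (\<forall>i. 0 \<le> y $ i) \<and> esum y \<le> c}"
    by (simp add: Delta_set_def c_def)
  show ?thesis
  proof (rule ex_ex1I)
    obtain x where x0: "\<forall>i. 0 \<le> x $ i" and x1: "esum x = 1"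
      and fx: "x = \<alpha> *\<^sub>R tensor_apply k P x + (1 - \<alpha> * esum (tensor_apply k P x)) *\<^sub>R v"
      using existence_simplex[OF k P v al] by blast
    define q where "q = esum (tensor_apply k P x)"
    define w where "w = 1 - \<alpha> * q"
    have q1: "q \<le> 1" using esum_T_le[OF P x0] x1 by (simp add: q_def)
    have q0: "0 \<le> q" using esum_nonneg T_nonneg[OF P x0] q_def by blast
    have wa: "1 - \<alpha> \<le> w" unfolding w_def using q1 al(1) mult_left_mono[OF q1 al(1)] by simp
    have w0: "0 < w" using wa a0 by simp
    define s where "s = w powr (- 1 / (real k - 1))"
    have s0: "0 < s" using w0 by (simp add: s_def)
    have sc: "s \<le> c" unfolding s_def c_def using kr a0 wa by (intro powr_mono2') auto
    have sk: "s ^ (k - 1) = 1 / w"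
    proof -
      have "s ^ (k - 1) = s powr real (k - 1)" using s0 by (simp add: powr_realpow)
      also have "\<dots> = w powr (- 1 / (real k - 1) * real (k - 1))" by (simp add: s_def powr_powr)
      also have "- 1 / (real k - 1) * real (k - 1) = -1" using k kr by (simp add: of_nat_diff)
      finally show ?thesis using w0 by (simp add: powr_minus_divide)
    qed
    have sk2: "s ^ (k - 2) * s = s ^ (k - 1)"
    proof -
      have "k - 1 = Suc (k - 2)" using k by simp
      then show ?thesis by (simp only: power_Suc2)
    qed
    define y where "y = s *\<^sub>R x"
    have ey: "esum y = s" using x1 by (simp add: y_def esum_scale)
    have xe: "x - \<alpha> *\<^sub>R tensor_apply k P x = w *\<^sub>R v"
      using fx unfolding w_def q_def by (metis add_diff_cancel_left')
    have "(esum y) ^ (k - 2) *\<^sub>R y - \<alpha> *\<^sub>R tensor_apply k P y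
        = s ^ (k - 1) *\<^sub>R (x - \<alpha> *\<^sub>R tensor_apply k P x)"
      unfolding ey unfolding y_def T_homog using sk2 by (simp add: sk2[symmetric] algebra_simps mult.commute)
    also have "\<dots> = v" unfolding xe sk using w0 by simp
    finally have "(esum y) ^ (k - 2) *\<^sub>R y - \<alpha> *\<^sub>R tensor_apply k P y = v" .
    moreover have "y \<in> Delta_set k \<alpha>" unfolding Dset using x0 s0 sc ey
      by (simp add: y_def)
    ultimately show "\<exists>y. y \<in> Delta_set k \<alpha> \<and> (esum y) ^ (k - 2) *\<^sub>R y - \<alpha> *\<^sub>R tensor_apply k P y = v"
      by blast
  next
    fix y z
    assume Y: "y \<in> Delta_set k \<alpha> \<and> (esum y) ^ (k - 2) *\<^sub>R y - \<alpha> *\<^sub>R tensor_apply k P y = v"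
      and Z: "z \<in> Delta_set k \<alpha> \<and> (esum z) ^ (k - 2) *\<^sub>R z - \<alpha> *\<^sub>R tensor_apply k P z = v"
    show "y = z"
    proof (cases "esum z \<le> esum y")
      case True
      show ?thesis using uniq_core[OF k P _ _ _ _ v1 al(1) _ _ K True] Y Z by (auto simp: Dset)
    next
      case False
      then have F: "esum y \<le> esum z" by simp
      show ?thesis using uniq_core[OF k P _ _ _ _ v1 al(1) _ _ K F] Y Z by (auto simp: Dset)
    qed
  qed
qed

end
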